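(* Let $E(u,v)=\sum_{p\geq0,q\geq1}E_{p,q}(t)u^pv^q$, where $E_{p,q}(t)=\sum_{n\geq1}|\{e\in\mathbf{I}_n(\geq,\geq,-): e\text{ has parameters }(p,q)\}|\,t^n$. Then $$\Bigl(1+\frac{tv}{1-u}+\frac{tv}{1-v/u}\Bigr)E(u,v)=tuv+\frac{tv}{1-u}E(1,v)+\frac{tv}{1-v/u}E(u,u).$$
   Context: $\mathbf{I}_n$ is the set of inversion sequences $e=(e_1,\ldots,e_n)$ with $0\leq e_i<i$; $\mathbf{I}_n(\geq,\geq,-)$ is the set of $e\in\mathbf{I}_n$ with no $i<j<k$ such that $e_i\geq e_j\geq e_k$. An entry $e_i$ is a left-to-right maximum if $e_i>e_j$ for all $j<i$. Let $\alpha(e)=\max_i e_i$ and $\beta(e)$ the largest element of $\{e_i: e_i\text{ not a left-to-right maximum}\}\cup\{-1\}$. The parameters of $e\in\mathbf{I}_n(\geq,\geq,-)$ are $(p,q)=(\alpha(e)-\beta(e),\,n-\alpha(e))$. $E(u,v)$ is a formal power series in $t$ whose coefficients are polynomials in $u,v$. *)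

theory Defs
  imports "HOL-Computational_Algebra.Polynomial" "HOL-Computational_Algebra.Fraction_Field"
          "HOL-Computational_Algebra.Formal_Power_Series"
begin

text \<open>Inversion sequences e = (e_1,...,e_n), represented as functions nat => nat,
  with e_i < i for 1 <= i <= n and e_i = 0 outside {1..n} (canonical representative).\<close>
definition inv_seqs :: "nat \<Rightarrow> (nat \<Rightarrow> nat) set" where
  "inv_seqs n = {e. (\<forall>i\<in>{1..n}. e i < i) \<and> (\<forall>i. i \<notin> {1..n} \<longrightarrow> e i = 0)}"

definition avoid_geq_geq :: "nat \<Rightarrow> (nat \<Rightarrow> nat) set" where
  "avoid_geq_geq n = {e \<in> inv_seqs n.
      \<not> (\<exists>i j k. 1 \<le> i \<and> i < j \<and> j < k \<and> k \<le> n \<and> e i \<ge> e j \<and> e j \<ge> e k)}"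

definition is_ltr_max :: "(nat \<Rightarrow> nat) \<Rightarrow> nat \<Rightarrow> bool" where
  "is_ltr_max e i \<longleftrightarrow> (\<forall>j\<in>{1..<i}. e i > e j)"

definition alpha :: "nat \<Rightarrow> (nat \<Rightarrow> nat) \<Rightarrow> int" where
  "alpha n e = Max (int ` e ` {1..n})"

definition beta :: "nat \<Rightarrow> (nat \<Rightarrow> nat) \<Rightarrow> int" where
  "beta n e = Max ({int (e i) | i. i \<in> {1..n} \<and> \<not> is_ltr_max e i} \<union> {-1})"

definition params :: "nat \<Rightarrow> (nat \<Rightarrow> nat) \<Rightarrow> int \<times> int" where
  "params n e = (alpha n e - beta n e, int n - alpha n e)"

definition cnt :: "nat \<Rightarrow> nat \<Rightarrow> nat \<Rightarrow> nat" where
  "cnt n p q = card {e \<in> avoid_geq_geq n. params n e = (int p, int q)}"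

text \<open>Bivariate polynomials in u,v: type int poly poly, outer variable v, inner variable u;
  monom (monom 1 p) q represents u^p v^q. For n >= 1 every e in I_n has 0 <= p <= n and
  1 <= q <= n, so the sums below range over all (p,q) with p >= 0, q >= 1.\<close>
definition E_coeff :: "nat \<Rightarrow> int poly poly" where
  "E_coeff n = (\<Sum>p\<in>{0..n}. \<Sum>q\<in>{1..n}. of_nat (cnt n p q) * monom (monom 1 p) q)"

type_synonym rf = "int poly poly fract"

definition U :: rf where "U = Fract [:[:0, 1:]:] 1"
definition V :: rf where "V = Fract [:0, 1:] 1"

text \<open>E(u,v) as a power series in t.\<close>
definition E_uv :: "rf fps" where
  "E_uv = Abs_fps (\<lambda>n. if n = 0 then 0 else Fract (E_coeff n) 1)"

text \<open>E(1,v): substitute u := 1.\<close>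
definition E_1v :: "rf fps" where
  "E_1v = Abs_fps (\<lambda>n. if n = 0 then 0
            else Fract (map_poly (\<lambda>c. [:poly c 1:]) (E_coeff n)) 1)"

text \<open>E(u,u): substitute v := u.\<close>
definition E_uu :: "rf fps" where
  "E_uu = Abs_fps (\<lambda>n. if n = 0 then 0 else Fract [: poly (E_coeff n) [:0, 1:] :] 1)"

end

theory Submission
  imports Defs
begin


lemma inv_seqs_fin: "finite (inv_seqs n)"
proof -
  let ?h = "\<lambda>f::nat\<Rightarrow>nat. map f [1..<n+1]"
  have inj: "inj_on ?h (inv_seqs n)"
  proof (rule inj_onI)
    fix f g assume f: "f \<in> inv_seqs n" and g: "g \<in> inv_seqs n" and eq: "?h f = ?h g"
    show "f = g"
    proof
      fix i show "f i = g i"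
      proof (cases "i \<in> {1..n}")
        case True
        then have "i - 1 < length [1..<n+1]" by auto
        have A: "?h f ! (i - 1) = f i" and B: "?h g ! (i - 1) = g i" using True by (auto simp del: upt_Suc simp: nth_map nth_upt)
        have "?h f ! (i - 1) = ?h g ! (i - 1)" using eq by (rule arg_cong)
        then show ?thesis unfolding A B .
      next
        case False then show ?thesis using f g by (auto simp: inv_seqs_def)
      qed
    qed
  qed
  have "?h ` inv_seqs n \<subseteq> {xs. set xs \<subseteq> {0..<n} \<and> length xs = n}"
  proof
    fix xs assume "xs \<in> ?h ` inv_seqs n"
    then obtain f where f: "f \<in> inv_seqs n" "xs = ?h f" by blast
    have "\<forall>i\<in>{1..n}. f i < n"
    proof
      fix i assume i: "i \<in> {1..n}"
      then have "f i < i" using f(1) by (auto simp: inv_seqs_def)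
      then show "f i < n" using i by auto
    qed
    then show "xs \<in> {xs. set xs \<subseteq> {0..<n} \<and> length xs = n}" using f(2) by auto
  qed
  then have "finite (?h ` inv_seqs n)"
    by (rule finite_subset) (rule finite_lists_length_eq, simp)
  then show ?thesis using inj finite_imageD by blast
qed

lemma avoid_fin: "finite (avoid_geq_geq n)"
  by (rule finite_subset[OF _ inv_seqs_fin[of n]]) (auto simp: avoid_geq_geq_def)

lemma alpha_props:
  assumes "n \<ge> 1" "e \<in> inv_seqs n"
  shows "\<forall>i\<in>{1..n}. int (e i) \<le> alpha n e" "0 \<le> alpha n e" "alpha n e < int n"
proof -
  have fin: "finite (int ` e ` {1..n})" and ne: "int ` e ` {1..n} \<noteq> {}" using assms by auto
  show 1: "\<forall>i\<in>{1..n}. int (e i) \<le> alpha n e" unfolding alpha_def using fin by auto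
  show "0 \<le> alpha n e" using 1 assms(1) by force
  have "alpha n e \<in> int ` e ` {1..n}" unfolding alpha_def using Max_in[OF fin ne] .
  then show "alpha n e < int n" using assms(2) by (auto simp: inv_seqs_def)
qed

definition Bset :: "nat \<Rightarrow> (nat \<Rightarrow> nat) \<Rightarrow> int set" where
  "Bset n e = (\<lambda>i. int (e i)) ` {i\<in>{1..n}. \<not> is_ltr_max e i}"

lemma beta_Bset: "beta n e = Max (insert (-1) (Bset n e))"
  unfolding beta_def Bset_def by (rule arg_cong[where f=Max]) auto

lemma Bset_fin: "finite (Bset n e)" unfolding Bset_def by auto

lemma beta_ge: "-1 \<le> beta n e"
  unfolding beta_Bset using Bset_fin by auto

lemma beta_less_iff: "beta n e < x \<longleftrightarrow> (-1 < x \<and> (\<forall>y\<in>Bset n e. y < x))"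
  unfolding beta_Bset using Bset_fin by auto

lemma beta_le_alpha:
  assumes "n \<ge> 1" "e \<in> inv_seqs n"
  shows "beta n e \<le> alpha n e"
  unfolding beta_Bset using Bset_fin alpha_props[OF assms]
  by (subst Max_le_iff) (auto simp: Bset_def)



lemma alpha_in:
  assumes "n \<ge> 1" "e \<in> inv_seqs n"
  shows "\<exists>j\<in>{1..n}. alpha n e = int (e j)"
proof -
  have fin: "finite (int ` e ` {1..n})" and ne: "int ` e ` {1..n} \<noteq> {}" using assms by auto
  have "alpha n e \<in> int ` e ` {1..n}" unfolding alpha_def using Max_in[OF fin ne] .
  then show ?thesis by auto
qed

lemma ext_inv:
  assumes "e \<in> inv_seqs n" "x \<le> n"
  shows "e(Suc n := x) \<in> inv_seqs (Suc n)"
  using assms by (auto simp: inv_seqs_def)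

lemma ltr_ext_le:
  assumes "i \<le> n"
  shows "is_ltr_max (e(Suc n := x)) i = is_ltr_max e i"
  using assms by (auto simp: is_ltr_max_def)

lemma ltr_ext_last:
  assumes "n \<ge> 1" "e \<in> inv_seqs n"
  shows "is_ltr_max (e(Suc n := x)) (Suc n) \<longleftrightarrow> int x > alpha n e"
proof
  assume h: "is_ltr_max (e(Suc n := x)) (Suc n)"
  obtain j where j: "j \<in> {1..n}" "alpha n e = int (e j)" using alpha_in[OF assms] by blast
  then have "x > e j" using h by (auto simp: is_ltr_max_def)
  then show "int x > alpha n e" using j by simp
next
  assume "int x > alpha n e"
  then show "is_ltr_max (e(Suc n := x)) (Suc n)"
    using alpha_props(1)[OF assms] by (force simp: is_ltr_max_def)
qed

lemma Bset_ext:
  assumes "n \<ge> 1" "e \<in> inv_seqs n"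
  shows "Bset (Suc n) (e(Suc n := x)) = Bset n e \<union> (if int x > alpha n e then {} else {int x})"
proof -
  have s: "{i\<in>{1..Suc n}. \<not> is_ltr_max (e(Suc n := x)) i}
     = {i\<in>{1..n}. \<not> is_ltr_max e i} \<union> (if int x > alpha n e then {} else {Suc n})"
    using ltr_ext_le[of _ n e x] ltr_ext_last[OF assms, of x] assms(1)
    by (auto simp: le_Suc_eq)
  show ?thesis unfolding Bset_def s by auto
qed

lemma alpha_ext:
  assumes "n \<ge> 1" "e \<in> inv_seqs n"
  shows "alpha (Suc n) (e(Suc n := x)) = max (alpha n e) (int x)"
proof -
  have s: "int ` (e(Suc n := x)) ` {1..Suc n} = insert (int x) (int ` e ` {1..n})"
  proof -
    have a: "{1..Suc n} = insert (Suc n) {1..n}" by auto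
    have b: "(e(Suc n := x)) ` {1..n} = e ` {1..n}" by auto
    show ?thesis unfolding a image_insert b by simp
  qed
  have fin: "finite (int ` e ` {1..n})" and ne: "int ` e ` {1..n} \<noteq> {}" using assms by auto
  show ?thesis unfolding alpha_def s Max_insert[OF fin ne] by simp
qed

lemma beta_ext:
  assumes "n \<ge> 1" "e \<in> inv_seqs n" "beta n e < int x"
  shows "beta (Suc n) (e(Suc n := x)) = (if int x > alpha n e then beta n e else int x)"
proof (cases "int x > alpha n e")
  case True
  have B: "Bset (Suc n) (e(Suc n := x)) = Bset n e" using Bset_ext[OF assms(1,2), of x] True by simp
  show ?thesis unfolding if_P[OF True] beta_Bset B ..
next
  case False
  have B: "Bset (Suc n) (e(Suc n := x)) = insert (int x) (Bset n e)" using Bset_ext[OF assms(1,2), of x] False by simp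
  have "Max (insert (-1) (insert (int x) (Bset n e))) = Max (insert (int x) (insert (-1) (Bset n e)))"
    by (simp only: insert_commute)
  also have "\<dots> = max (int x) (Max (insert (-1) (Bset n e)))"
    by (rule Max_insert) (simp_all add: Bset_fin)
  also have "\<dots> = int x" using assms(3) unfolding beta_Bset by simp
  finally show ?thesis unfolding if_not_P[OF False] beta_Bset B .
qed

lemma avoid_ext:
  assumes "n \<ge> 1" "e \<in> inv_seqs n" "x \<le> n"
  shows "e(Suc n := x) \<in> avoid_geq_geq (Suc n) \<longleftrightarrow> e \<in> avoid_geq_geq n \<and> beta n e < int x"
proof
  assume h: "e(Suc n := x) \<in> avoid_geq_geq (Suc n)"
  have "e \<in> avoid_geq_geq n"
  proof -
    { fix i j k assume t: "1 \<le> i" "i < j" "j < k" "k \<le> n" "e i \<ge> e j" "e j \<ge> e k"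
      have "\<exists>i j k. 1 \<le> i \<and> i < j \<and> j < k \<and> k \<le> Suc n \<and> (e(Suc n := x)) i \<ge> (e(Suc n := x)) j
                  \<and> (e(Suc n := x)) j \<ge> (e(Suc n := x)) k"
        using t by (intro exI[of _ i] exI[of _ j] exI[of _ k]) auto
      then have False using h unfolding avoid_geq_geq_def by blast }
    then show ?thesis using assms(2) unfolding avoid_geq_geq_def by blast
  qed
  moreover have "beta n e < int x"
    unfolding beta_less_iff
  proof (intro conjI ballI)
    fix y assume "y \<in> Bset n e"
    then obtain j where j: "j \<in> {1..n}" "\<not> is_ltr_max e j" "y = int (e j)" unfolding Bset_def by auto
    then obtain i where i: "i \<in> {1..<j}" "e i \<ge> e j" unfolding is_ltr_max_def by (auto simp: not_less)
    show "y < int x"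
    proof (rule ccontr)
      assume "\<not> y < int x"
      then have "e j \<ge> x" using j by simp
      then have "\<exists>i j k. 1 \<le> i \<and> i < j \<and> j < k \<and> k \<le> Suc n \<and> (e(Suc n := x)) i \<ge> (e(Suc n := x)) j
                  \<and> (e(Suc n := x)) j \<ge> (e(Suc n := x)) k"
        using i j by (intro exI[of _ i] exI[of _ j] exI[of _ "Suc n"]) auto
      then show False using h unfolding avoid_geq_geq_def by blast
    qed
  qed simp
  ultimately show "e \<in> avoid_geq_geq n \<and> beta n e < int x" by blast
next
  assume h: "e \<in> avoid_geq_geq n \<and> beta n e < int x"
  have inv: "e(Suc n := x) \<in> inv_seqs (Suc n)" using ext_inv[OF assms(2,3)] .
  { fix i j k assume t: "1 \<le> i" "i < j" "j < k" "k \<le> Suc n"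
      "(e(Suc n := x)) i \<ge> (e(Suc n := x)) j" "(e(Suc n := x)) j \<ge> (e(Suc n := x)) k"
    have False
    proof (cases "k = Suc n")
      case True
      then have ej: "e j \<ge> x" "e i \<ge> e j" using t by auto
      have "\<not> is_ltr_max e j" using t ej unfolding is_ltr_max_def by (auto simp: not_less)
      then have "int (e j) \<in> Bset n e" using t True unfolding Bset_def by auto
      then have "int (e j) < int x" using h beta_less_iff by blast
      then show False using ej by simp
    next
      case False
      then have "k \<le> n" using t by simp
      then show False using h t unfolding avoid_geq_geq_def by auto
    qed }
  then show "e(Suc n := x) \<in> avoid_geq_geq (Suc n)" using inv unfolding avoid_geq_geq_def by blast
qed



definition M :: "nat \<Rightarrow> (nat \<Rightarrow> nat) \<Rightarrow> int poly poly" where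
  "M n e = monom (monom 1 (nat (fst (params n e)))) (nat (snd (params n e)))"

lemma params_bounds:
  assumes "n \<ge> 1" "e \<in> inv_seqs n"
  shows "0 \<le> fst (params n e)" "fst (params n e) \<le> int n" "1 \<le> snd (params n e)" "snd (params n e) \<le> int n"
  using alpha_props[OF assms] beta_le_alpha[OF assms] beta_ge[of n e]
  by (auto simp: params_def)

lemma E_coeff_sum:
  assumes "n \<ge> 1"
  shows "E_coeff n = (\<Sum>e\<in>avoid_geq_geq n. M n e)"
proof -
  let ?A = "avoid_geq_geq n"
  let ?g = "\<lambda>e. (nat (fst (params n e)), nat (snd (params n e)))"
  let ?T = "{0..n} \<times> {1..n}"
  have inv: "\<And>e. e \<in> ?A \<Longrightarrow> e \<in> inv_seqs n" by (auto simp: avoid_geq_geq_def)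
  have set_eq: "\<And>p q. {e \<in> ?A. ?g e = (p, q)} = {e \<in> ?A. params n e = (int p, int q)}"
  proof (intro Collect_cong conj_cong refl)
    fix p q e assume e: "e \<in> ?A"
    then show "(?g e = (p, q)) = (params n e = (int p, int q))"
      using params_bounds[OF assms inv[OF e]] by (cases "params n e") auto
  qed
  have "E_coeff n = (\<Sum>(p,q)\<in>?T. of_nat (cnt n p q) * monom (monom 1 p) q)"
    unfolding E_coeff_def by (simp add: sum.cartesian_product)
  also have "\<dots> = (\<Sum>(p,q)\<in>?T. \<Sum>e\<in>{e \<in> ?A. ?g e = (p, q)}. M n e)"
  proof (rule sum.cong[OF refl], clarify)
    fix p q
    have "(\<Sum>e\<in>{e \<in> ?A. ?g e = (p, q)}. M n e) = (\<Sum>e\<in>{e \<in> ?A. ?g e = (p, q)}. monom (monom 1 p) q)"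
      by (rule sum.cong) (auto simp: M_def)
    also have "\<dots> = of_nat (cnt n p q) * monom (monom 1 p) q"
      unfolding set_eq cnt_def by simp
    finally show "of_nat (cnt n p q) * monom (monom 1 p) q = (\<Sum>e\<in>{e \<in> ?A. ?g e = (p, q)}. M n e)" by simp
  qed
  also have "\<dots> = (\<Sum>pq\<in>?T. \<Sum>e\<in>{e \<in> ?A. ?g e = pq}. M n e)"
    by (rule sum.cong[OF refl], clarsimp)
  also have "\<dots> = (\<Sum>e\<in>?A. M n e)"
  proof (rule sum.group[OF avoid_fin])
    show "finite ?T" by simp
    show "?g ` ?A \<subseteq> ?T"
    proof
      fix y assume "y \<in> ?g ` ?A"
      then obtain e where e: "e \<in> ?A" "y = ?g e" by blast
      show "y \<in> ?T" using params_bounds[OF assms inv[OF e(1)]] e(2) by auto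
    qed
  qed
  finally show ?thesis .
qed

lemma sum_avoid_Suc:
  assumes "n \<ge> 1"
  shows "(\<Sum>e'\<in>avoid_geq_geq (Suc n). f e') =
         (\<Sum>e\<in>avoid_geq_geq n. \<Sum>x\<in>{nat (beta n e + 1)..n}. f (e(Suc n := x)))"
proof -
  let ?B = "\<lambda>e. {nat (beta n e + 1)..n}"
  have inv: "\<And>e. e \<in> avoid_geq_geq n \<Longrightarrow> e \<in> inv_seqs n" by (auto simp: avoid_geq_geq_def)
  have Bx: "\<And>e x. x \<in> ?B e \<longleftrightarrow> beta n e < int x \<and> x \<le> n"
    using beta_ge by (auto simp: nat_le_iff)
  have "(\<Sum>e\<in>avoid_geq_geq n. \<Sum>x\<in>?B e. f (e(Suc n := x)))
        = (\<Sum>(e,x)\<in>Sigma (avoid_geq_geq n) ?B. f (e(Suc n := x)))"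
    by (rule sum.Sigma) (auto simp: avoid_fin)
  also have "\<dots> = (\<Sum>e'\<in>avoid_geq_geq (Suc n). f e')"
  proof (rule sum.reindex_bij_witness[where i = "\<lambda>e'. (e'(Suc n := 0), e' (Suc n))"
        and j = "\<lambda>(e,x). e(Suc n := x)"])
    fix a assume a: "a \<in> Sigma (avoid_geq_geq n) ?B"
    then obtain e x where ex: "a = (e, x)" "e \<in> avoid_geq_geq n" "x \<in> ?B e" by blast
    have e0: "e (Suc n) = 0" using inv[OF ex(2)] by (auto simp: inv_seqs_def)
    show "((case a of (e, x) \<Rightarrow> e(Suc n := x))(Suc n := 0), (case a of (e, x) \<Rightarrow> e(Suc n := x)) (Suc n)) = a"
      using ex e0 by auto
    show "(case a of (e, x) \<Rightarrow> e(Suc n := x)) \<in> avoid_geq_geq (Suc n)"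
      using ex avoid_ext[OF assms inv[OF ex(2)]] Bx by auto
    show "f (case a of (e, x) \<Rightarrow> e(Suc n := x)) = (case a of (e, x) \<Rightarrow> f (e(Suc n := x)))"
      using ex by simp
  next
    fix b assume b: "b \<in> avoid_geq_geq (Suc n)"
    then have binv: "b \<in> inv_seqs (Suc n)" by (auto simp: avoid_geq_geq_def)
    let ?e = "b(Suc n := 0)"
    have einv: "?e \<in> inv_seqs n" using binv by (auto simp: inv_seqs_def)
    have "b (Suc n) < Suc n" using binv unfolding inv_seqs_def by auto
    then have bn: "b (Suc n) \<le> n" by simp
    have beq: "?e(Suc n := b (Suc n)) = b" by simp
    show "(\<lambda>(e, x). e(Suc n := x)) (?e, b (Suc n)) = b" by simp
    have "?e \<in> avoid_geq_geq n \<and> beta n ?e < int (b (Suc n))"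
      using avoid_ext[OF assms einv bn] b beq by simp
    then show "(?e, b (Suc n)) \<in> Sigma (avoid_geq_geq n) ?B" using Bx bn by auto
  qed
  finally show ?thesis by simp
qed



lemma children_sum:
  assumes n: "n \<ge> 1" and eA: "e \<in> avoid_geq_geq n"
  defines "a \<equiv> nat (alpha n e)" and "b \<equiv> nat (beta n e + 1)"
  shows "(\<Sum>x\<in>{b..n}. M (Suc n) (e(Suc n := x))) =
         (\<Sum>x\<in>{b..a}. monom (monom 1 (a - x)) (Suc n - a)) +
         (\<Sum>x\<in>{Suc a..n}. monom (monom 1 (x + 1 - b)) (Suc n - x))"
    and "M n e = monom (monom 1 (a + 1 - b)) (n - a)"
    and "b \<le> a + 1" and "a < n"
proof -
  have inv: "e \<in> inv_seqs n" using eA by (auto simp: avoid_geq_geq_def)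
  note ap = alpha_props[OF n inv]
  have ba: "beta n e \<le> alpha n e" by (rule beta_le_alpha[OF n inv])
  have bg: "-1 \<le> beta n e" by (rule beta_ge)
  have aint: "alpha n e = int a" using ap unfolding a_def by simp
  have bint: "beta n e = int b - 1" using bg unfolding b_def by simp
  show "b \<le> a + 1" "a < n" using ba ap aint bint by auto
  then have split: "{b..n} = {b..a} \<union> {Suc a..n}" by auto
  have "(\<Sum>x\<in>{b..n}. M (Suc n) (e(Suc n := x))) =
        (\<Sum>x\<in>{b..a}. M (Suc n) (e(Suc n := x))) + (\<Sum>x\<in>{Suc a..n}. M (Suc n) (e(Suc n := x)))"
    unfolding split by (rule sum.union_disjoint) auto
  also have "(\<Sum>x\<in>{b..a}. M (Suc n) (e(Suc n := x))) = (\<Sum>x\<in>{b..a}. monom (monom 1 (a - x)) (Suc n - a))"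
  proof (rule sum.cong[OF refl])
    fix x assume x: "x \<in> {b..a}"
    have bl: "beta n e < int x" using x bint by auto
    have "\<not> int x > alpha n e" using x aint by auto
    then have "params (Suc n) (e(Suc n := x)) = (int a - int x, int (Suc n) - int a)"
      unfolding params_def alpha_ext[OF n inv] beta_ext[OF n inv bl] using aint by auto
    moreover have "nat (1 + int n - int a) = Suc n - a"
    proof -
      have "int (Suc n - a) = 1 + int n - int a" using \<open>a < n\<close> by (simp add: of_nat_diff)
      then show ?thesis by (metis nat_int)
    qed
    ultimately show "M (Suc n) (e(Suc n := x)) = monom (monom 1 (a - x)) (Suc n - a)"
      unfolding M_def using x by (simp add: nat_diff_distrib)
  qed
  also have "(\<Sum>x\<in>{Suc a..n}. M (Suc n) (e(Suc n := x))) = (\<Sum>x\<in>{Suc a..n}. monom (monom 1 (x + 1 - b)) (Suc n - x))"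
  proof (rule sum.cong[OF refl])
    fix x assume x: "x \<in> {Suc a..n}"
    have bl: "beta n e < int x" using x bint \<open>b \<le> a + 1\<close> by auto
    have gt: "int x > alpha n e" using x aint by auto
    then have "params (Suc n) (e(Suc n := x)) = (int (x + 1 - b), int (Suc n - x))"
      unfolding params_def alpha_ext[OF n inv] beta_ext[OF n inv bl] using bint x \<open>b \<le> a + 1\<close>
      by (auto simp: of_nat_diff)
    then show "M (Suc n) (e(Suc n := x)) = monom (monom 1 (x + 1 - b)) (Suc n - x)"
      unfolding M_def by (simp only: fst_conv snd_conv nat_int)
  qed
  finally show "(\<Sum>x\<in>{b..n}. M (Suc n) (e(Suc n := x))) =
         (\<Sum>x\<in>{b..a}. monom (monom 1 (a - x)) (Suc n - a)) +
         (\<Sum>x\<in>{Suc a..n}. monom (monom 1 (x + 1 - b)) (Suc n - x))" .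
  have "params n e = (int (a + 1 - b), int (n - a))"
    unfolding params_def using aint bint \<open>b \<le> a + 1\<close> \<open>a < n\<close> by (auto simp: of_nat_diff)
  then show "M n e = monom (monom 1 (a + 1 - b)) (n - a)"
    unfolding M_def by (simp only: fst_conv snd_conv nat_int)
qed



definition fr :: "int poly poly \<Rightarrow> rf" where "fr a = Fract a 1"

lemma fr_add: "fr (a + b) = fr a + fr b" by (simp add: fr_def)
lemma fr_mult: "fr (a * b) = fr a * fr b" by (simp add: fr_def)
lemma fr_diff: "fr (a - b) = fr a - fr b" by (simp add: fr_def)
lemma fr_0: "fr 0 = 0" by (simp add: fr_def Zero_fract_def)
lemma fr_1: "fr 1 = 1" by (simp add: fr_def One_fract_def)
lemma fr_power: "fr (a ^ k) = fr a ^ k" by (induct k) (simp_all add: fr_1 fr_mult)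
lemma fr_sum: "fr (sum g A) = (\<Sum>x\<in>A. fr (g x))"
  using sum_comp_morphism[of fr g A, OF fr_0 fr_add] by (simp add: o_def)
lemma fr_inj: "fr a = fr b \<longleftrightarrow> a = b" by (simp add: fr_def eq_fract)

lemma U_fr: "U = fr [:[:0, 1:]:]" by (simp add: U_def fr_def)
lemma V_fr: "V = fr [:0, 1:]" by (simp add: V_def fr_def)

lemma U_nz: "U \<noteq> 0" unfolding U_fr fr_0[symmetric] fr_inj by simp
lemma one_U_nz: "1 - U \<noteq> 0" unfolding U_fr fr_1[symmetric] fr_diff[symmetric] fr_0[symmetric] fr_inj
  by (simp add: one_pCons)
lemma U_V_nz: "U - V \<noteq> 0" unfolding U_fr V_fr fr_diff[symmetric] fr_0[symmetric] fr_inj by simp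

lemma const_mult: "[:a * b:] = [:a:] * [:(b::'a::comm_ring_1):]" by simp
lemma const_pow: "[:a ^ k:] = [:(a::'a::comm_ring_1):] ^ k"
proof (induct k)
  case 0 then show ?case by (simp add: one_pCons)
next
  case (Suc k)
  have "[:a ^ Suc k:] = [:a:] * [:a ^ k:]" by (simp only: power_Suc const_mult)
  then show ?case using Suc by simp
qed

lemma fr_mon: "fr (monom (monom 1 P) Q) = U ^ P * V ^ Q"
proof -
  have "monom (monom (1::int) P) Q = [:[:0, 1:]:] ^ P * [:0, 1:] ^ Q"
    by (simp add: monom_altdef const_pow[symmetric])
  then show ?thesis by (simp add: fr_mult fr_power U_fr V_fr)
qed

definition L1 :: "int poly poly \<Rightarrow> rf" where "L1 a = fr (map_poly (\<lambda>c. [:poly c 1:]) a)"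
definition L2 :: "int poly poly \<Rightarrow> rf" where "L2 a = fr [:poly a [:0, 1:]:]"

lemma L1_add: "L1 (a + b) = L1 a + L1 b"
proof -
  have "map_poly (\<lambda>c. [:poly c 1:]) (a + b) = map_poly (\<lambda>c. [:poly c 1:]) a + map_poly (\<lambda>c. [:poly c 1:]) b"
    by (rule poly_eqI) (simp add: coeff_map_poly)
  then show ?thesis by (simp add: L1_def fr_add)
qed
lemma L1_0: "L1 0 = 0" by (simp add: L1_def fr_0)
lemma L2_add: "L2 (a + b) = L2 a + L2 b"
proof -
  have e: "[:poly (a + b) [:0, 1:]:] = [:poly a [:0, 1:]:] + [:poly b [:0, 1:]:]" by simp
  show ?thesis unfolding L2_def e fr_add ..
qed
lemma L2_0: "L2 0 = 0" by (simp add: L2_def fr_0)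

lemma L1_mon: "L1 (monom (monom 1 P) Q) = V ^ Q"
proof -
  have 1: "map_poly (\<lambda>c. [:poly c 1:]) (monom (monom (1::int) P) Q) = monom [:poly (monom (1::int) P) 1:] Q"
    by (rule map_poly_monom) simp
  have 2: "[:poly (monom (1::int) P) 1:] = 1" by (simp add: poly_monom one_pCons)
  have 3: "monom (1::int poly) Q = [:0, 1:] ^ Q" by (simp add: monom_altdef)
  have "map_poly (\<lambda>c. [:poly c 1:]) (monom (monom (1::int) P) Q) = [:0, 1:] ^ Q"
    unfolding 1 2 3 ..
  then show ?thesis by (simp add: L1_def fr_power V_fr)
qed

lemma L2_mon: "L2 (monom (monom 1 P) Q) = U ^ (P + Q)"
proof -
  have "[:poly (monom (monom (1::int) P) Q) [:0, 1:]:] = [:[:0, 1:]:] ^ (P + Q)"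
    by (simp add: poly_monom monom_altdef const_pow[symmetric] power_add)
  then show ?thesis by (simp add: L2_def fr_power U_fr)
qed



definition c1 :: rf where "c1 = V / (1 - U)"
definition c2 :: rf where "c2 = V / (1 - V / U)"
definition T :: "int poly poly \<Rightarrow> rf" where
  "T z = c1 * (L1 z - fr z) + c2 * (L2 z - fr z)"

lemma T_add: "T (a + b) = T a + T b"
  unfolding T_def L1_add L2_add fr_add by (simp add: algebra_simps)
lemma T_0: "T 0 = 0" unfolding T_def L1_0 L2_0 fr_0 by simp
lemma T_sum: "T (sum g A) = (\<Sum>x\<in>A. T (g x))"
  using sum_comp_morphism[of T g A, OF T_0 T_add] by (simp add: o_def)

lemma c1_mult: "c1 * (1 - U) = V" unfolding c1_def using one_U_nz by simp
lemma c2_mult: "c2 * (U - V) = V * U"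
proof -
  have "1 - V / U = (U - V) / U" using U_nz by (simp add: field_simps)
  then show ?thesis unfolding c2_def using U_nz U_V_nz by (simp add: field_simps)
qed

lemma geomA: "c1 * (V ^ Q - U ^ P * V ^ Q) = (\<Sum>i<P. U ^ i) * V ^ (Q + 1)"
proof -
  have e1: "V ^ Q - U ^ P * V ^ Q = (1 - U ^ P) * V ^ Q" by (simp add: algebra_simps)
  have "c1 * (V ^ Q - U ^ P * V ^ Q) = c1 * ((1 - U) * (\<Sum>i<P. U ^ i) * V ^ Q)"
    unfolding e1 one_diff_power_eq ..
  also have "\<dots> = (c1 * (1 - U)) * (\<Sum>i<P. U ^ i) * V ^ Q" by (simp only: mult_ac)
  also have "\<dots> = (\<Sum>i<P. U ^ i) * V ^ (Q + 1)" unfolding c1_mult by (simp add: mult_ac)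
  finally show ?thesis .
qed

lemma geomB: "c2 * (U ^ (P + Q) - U ^ P * V ^ Q) = (\<Sum>i<Q. U ^ (P + 1 + i) * V ^ (Q - i))"
proof -
  have e1: "U ^ (P + Q) - U ^ P * V ^ Q = U ^ P * (U ^ Q - V ^ Q)" by (simp add: algebra_simps power_add)
  have "c2 * (U ^ (P + Q) - U ^ P * V ^ Q) = c2 * (U ^ P * ((U - V) * (\<Sum>i<Q. V ^ (Q - Suc i) * U ^ i)))"
    unfolding e1 power_diff_sumr2 ..
  also have "\<dots> = (c2 * (U - V)) * U ^ P * (\<Sum>i<Q. V ^ (Q - Suc i) * U ^ i)"
    by (simp only: mult_ac)
  also have "\<dots> = (\<Sum>i<Q. V * U * U ^ P * (V ^ (Q - Suc i) * U ^ i))"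
    unfolding c2_mult by (simp add: sum_distrib_left)
  also have "\<dots> = (\<Sum>i<Q. U ^ (P + 1 + i) * V ^ (Q - i))"
  proof (rule sum.cong[OF refl])
    fix i assume "i \<in> {..<Q}"
    then have "Q - i = Suc (Q - Suc i)" by auto
    then show "V * U * U ^ P * (V ^ (Q - Suc i) * U ^ i) = U ^ (P + 1 + i) * V ^ (Q - i)"
      by (simp add: power_add algebra_simps)
  qed
  finally show ?thesis .
qed

lemma T_mon: "T (monom (monom 1 P) Q) = (\<Sum>i<P. U ^ i) * V ^ (Q + 1) + (\<Sum>i<Q. U ^ (P + 1 + i) * V ^ (Q - i))"
  unfolding T_def L1_mon L2_mon fr_mon geomA[symmetric] geomB[symmetric] ..

lemma reindexA:
  fixes a b :: nat
  assumes "b \<le> a + 1"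
  shows "(\<Sum>x\<in>{b..a}. g (a - x)) = (\<Sum>i<a + 1 - b. g i)"
proof (rule sum.reindex_bij_witness[where i = "\<lambda>i. a - i" and j = "\<lambda>x. a - x"])
  fix x assume x: "x \<in> {b..a}"
  then show "a - (a - x) = x" by (simp add: diff_diff_cancel)
  show "a - x \<in> {..<a + 1 - b}" using x assms by auto
  show "g (a - x) = g (a - x)" ..
next
  fix i assume i: "i \<in> {..<a + 1 - b}"
  then show "a - (a - i) = i" by auto
  show "a - i \<in> {b..a}" using i assms by auto
qed

lemma reindexB:
  shows "(\<Sum>x\<in>{Suc a..n}. h x) = (\<Sum>i<n - a. h (Suc a + i))"
  by (rule sum.reindex_bij_witness[where i = "\<lambda>i. Suc a + i" and j = "\<lambda>x. x - Suc a"]) auto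

lemma per_e:
  assumes n: "n \<ge> 1" and eA: "e \<in> avoid_geq_geq n"
  shows "fr (\<Sum>x\<in>{nat (beta n e + 1)..n}. M (Suc n) (e(Suc n := x))) = T (M n e)"
proof -
  define a where "a = nat (alpha n e)"
  define b where "b = nat (beta n e + 1)"
  note cs = children_sum[OF n eA, folded a_def b_def]
  have "fr (\<Sum>x\<in>{b..n}. M (Suc n) (e(Suc n := x))) =
        (\<Sum>x\<in>{b..a}. U ^ (a - x) * V ^ (Suc n - a)) + (\<Sum>x\<in>{Suc a..n}. U ^ (x + 1 - b) * V ^ (Suc n - x))"
    unfolding cs(1) fr_add fr_sum fr_mon ..
  also have "\<dots> = (\<Sum>i<a + 1 - b. U ^ i * V ^ (Suc n - a)) + (\<Sum>i<n - a. U ^ (Suc a + i + 1 - b) * V ^ (Suc n - (Suc a + i)))"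
    using reindexA[OF cs(3), of "\<lambda>i. U ^ i * V ^ (Suc n - a)"] reindexB[of "\<lambda>x. U ^ (x + 1 - b) * V ^ (Suc n - x)" a n]
    by simp
  also have "\<dots> = T (M n e)"
  proof -
    have s1: "(\<Sum>i<a + 1 - b. U ^ i * V ^ (Suc n - a)) = (\<Sum>i<a + 1 - b. U ^ i) * V ^ (n - a + 1)"
      using cs(4) by (simp add: Suc_diff_le sum_distrib_right)
    have s2: "(\<Sum>i<n - a. U ^ (Suc a + i + 1 - b) * V ^ (Suc n - (Suc a + i)))
            = (\<Sum>i<n - a. U ^ (a + 1 - b + 1 + i) * V ^ (n - a - i))"
    proof (rule sum.cong[OF refl])
      fix i assume "i \<in> {..<n - a}"
      have e1: "Suc a + i + 1 - b = a + 1 - b + 1 + i" "Suc n - (Suc a + i) = n - a - i" using cs(3) by auto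
      show "U ^ (Suc a + i + 1 - b) * V ^ (Suc n - (Suc a + i)) = U ^ (a + 1 - b + 1 + i) * V ^ (n - a - i)"
        unfolding e1 ..
    qed
    show ?thesis unfolding cs(2) T_mon s1 s2 ..
  qed
  finally show ?thesis unfolding b_def .
qed

lemma rec_main:
  assumes n: "n \<ge> 1"
  shows "fr (E_coeff (Suc n)) = T (E_coeff n)"
proof -
  have "fr (E_coeff (Suc n)) = fr (\<Sum>e\<in>avoid_geq_geq n. \<Sum>x\<in>{nat (beta n e + 1)..n}. M (Suc n) (e(Suc n := x)))"
    unfolding E_coeff_sum[of "Suc n", simplified] sum_avoid_Suc[OF n] ..
  also have "\<dots> = (\<Sum>e\<in>avoid_geq_geq n. fr (\<Sum>x\<in>{nat (beta n e + 1)..n}. M (Suc n) (e(Suc n := x))))"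
    by (rule fr_sum)
  also have "\<dots> = (\<Sum>e\<in>avoid_geq_geq n. T (M n e))"
    by (rule sum.cong[OF refl]) (rule per_e[OF n])
  also have "\<dots> = T (E_coeff n)" unfolding E_coeff_sum[OF n] T_sum ..
  finally show ?thesis .
qed


unbundle fps_syntax

lemma A1: "avoid_geq_geq 1 = {\<lambda>_. 0}"
proof
  show "avoid_geq_geq 1 \<subseteq> {\<lambda>_. 0}"
  proof
    fix e assume "e \<in> avoid_geq_geq 1"
    then have "e \<in> inv_seqs 1" by (simp add: avoid_geq_geq_def)
    then have "\<forall>i. e i = 0"
    proof (intro allI)
      fix i assume ei: "e \<in> inv_seqs 1"
      show "e i = 0"
      proof (cases "i = 1")
        case True then show ?thesis using ei by (simp add: inv_seqs_def)
      next
        case False then show ?thesis using ei by (simp add: inv_seqs_def)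
      qed
    qed
    then show "e \<in> {\<lambda>_. 0}" by auto
  qed
  show "{\<lambda>_. 0} \<subseteq> avoid_geq_geq 1"
    by (auto simp: avoid_geq_geq_def inv_seqs_def)
qed

lemma M1: "M 1 (\<lambda>_. 0) = monom (monom 1 1) 1"
proof -
  have a: "alpha 1 (\<lambda>_. 0) = 0" by (simp add: alpha_def)
  have "Bset 1 (\<lambda>_. 0) = {}" by (auto simp: Bset_def is_ltr_max_def)
  then have b: "beta 1 (\<lambda>_. 0) = -1" by (simp add: beta_Bset)
  show ?thesis unfolding M_def params_def a b by simp
qed

lemma E1: "fr (E_coeff 1) = U * V"
  unfolding E_coeff_sum[of 1, OF order_refl] A1
  by (simp add: M1 fr_mon del: One_nat_def)
lemma E1': "fr (E_coeff (Suc 0)) = U * V" using E1 by simp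

lemma E_uv_nth: "E_uv $ k = (if k = 0 then 0 else fr (E_coeff k))"
  by (simp add: E_uv_def fr_def)
lemma E_1v_nth: "E_1v $ k = (if k = 0 then 0 else L1 (E_coeff k))"
  by (simp add: E_1v_def L1_def fr_def)
lemma E_uu_nth: "E_uu $ k = (if k = 0 then 0 else L2 (E_coeff k))"
  by (simp add: E_uu_def L2_def fr_def)

theorem proposition2p3:
  shows "(1 + fps_X * fps_const (V / (1 - U)) + fps_X * fps_const (V / (1 - V / U))) * E_uv
       = fps_X * fps_const (U * V) + fps_X * fps_const (V / (1 - U)) * E_1v
         + fps_X * fps_const (V / (1 - V / U)) * E_uu"
proof -
  have l: "(1 + fps_X * fps_const c1 + fps_X * fps_const c2) * E_uv
      = E_uv + fps_X * (fps_const c1 * E_uv) + fps_X * (fps_const c2 * E_uv)"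
    by (simp only: distrib_right mult_1_left mult.assoc)
  have r: "fps_X * fps_const (U * V) + fps_X * fps_const c1 * E_1v + fps_X * fps_const c2 * E_uu
      = fps_X * fps_const (U * V) + fps_X * (fps_const c1 * E_1v) + fps_X * (fps_const c2 * E_uu)"
    by (simp add: mult.assoc)
  have "(1 + fps_X * fps_const c1 + fps_X * fps_const c2) * E_uv
      = fps_X * fps_const (U * V) + fps_X * fps_const c1 * E_1v + fps_X * fps_const c2 * E_uu"
    unfolding l r
  proof (rule fps_ext)
    fix m
    show "(E_uv + fps_X * (fps_const c1 * E_uv) + fps_X * (fps_const c2 * E_uv)) $ m =
          (fps_X * fps_const (U * V) + fps_X * (fps_const c1 * E_1v) + fps_X * (fps_const c2 * E_uu)) $ m"
    proof (cases m)
      case 0 then show ?thesis by (simp add: E_uv_nth)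
    next
      case (Suc k)
      show ?thesis
      proof (cases k)
        case 0 then show ?thesis using Suc by (simp add: E_uv_nth E_1v_nth E_uu_nth E1')
      next
        case (Suc j)
        have rm: "fr (E_coeff (Suc (Suc j))) = T (E_coeff (Suc j))" by (rule rec_main) simp
        have key: "fr (E_coeff (Suc (Suc j))) + c1 * fr (E_coeff (Suc j)) + c2 * fr (E_coeff (Suc j))
            = c1 * L1 (E_coeff (Suc j)) + c2 * L2 (E_coeff (Suc j))"
          unfolding rm T_def by (simp add: algebra_simps)
        show ?thesis using \<open>m = Suc k\<close> Suc key
          by (simp add: E_uv_nth E_1v_nth E_uu_nth)
      qed
    qed
  qed
  then show ?thesis unfolding c1_def c2_def .
qed


end
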